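(* Let $\Omega\subset\mathbb{R}^2$ be open, connected and simply connected, with light-cone coordinates $(\xi_L,\xi_R)$, and let $f:\Omega\to\mathbb{C}^N\setminus\{0\}$ be a smooth solution of the Euler--Lagrange equations of the $\mathbb{C}P^{N-1}$ sigma model on Minkowski space, $$P\Big\{\partial_L\partial_R f-\frac{1}{f^\dagger f}\big((f^\dagger\partial_R f)\,\partial_L f+(f^\dagger\partial_L f)\,\partial_R f\big)\Big\}=0,\qquad P={\bf 1}-\frac{f\otimes f^\dagger}{f^\dagger f}.$$ Let $X:\Omega\to su(N)$ be the associated surface, i.e. $\partial_L X=[\partial_L P,P]$, $\partial_R X=-[\partial_R P,P]$. Then the induced metric $G_{BD}=(\partial_B X,\partial_D X)$, $B,D\in\{L,R\}$, is $$G_{LL}=J_L=\frac{\partial_L f^\dagger P\partial_L f}{f^\dagger f},\quad G_{RR}=J_R=\frac{\partial_R f^\dagger P\partial_R f}{f^\dagger f},\quad G_{LR}=-\Re\Big(\frac{\partial_R f^\dagger P\partial_L f}{f^\dagger f}\Big),$$ and the first fundamental form $I=J_L\,d\xi_L^2+2G_{LR}\,d\xi_L d\xi_R+J_R\,d\xi_R^2$ is positive semidefinite at every point of $\Omega$ ($J_L\ge 0$, $J_R\ge0$, $\det G\ge 0$). Moreover, $I$ is positive definite at a point $(\xi_L^0,\xi_R^0)\in\Omega$ if either $\Im\big(\partial_L f^\dagger P\partial_R f\big)(\xi_L^0,\xi_R^0)\neq 0$, or the vectors $\partial_L f(\xi_L^0,\xi_R^0)$, $\partial_R f(\xi_L^0,\xi_R^0)$,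 $f(\xi_L^0,\xi_R^0)$ are linearly independent over $\mathbb{C}$.
   Context: Minkowski metric $ds^2=(d\xi^1)^2-(d\xi^2)^2=d\xi_L\,d\xi_R$ with $\xi_L=\xi^1+\xi^2$, $\xi_R=\xi^1-\xi^2$, $\partial_L=\frac12(\partial_{\xi^1}+\partial_{\xi^2})$, $\partial_R=\frac12(\partial_{\xi^1}-\partial_{\xi^2})$. Vectors in $\mathbb{C}^N$ are columns, $f^\dagger$ is the conjugate transpose, and $f\otimes f^\dagger$ denotes the $N\times N$ matrix $ff^\dagger$. The algebra $su(N)$ is identified with the Euclidean space $\mathbb{R}^{N^2-1}$ via the scalar product $(A,B)=-\frac12\,\mathrm{tr}(AB)$. For a solution $f$ one has $\partial_L[\partial_R P,P]+\partial_R[\partial_L P,P]=0$, so an $su(N)$-valued function $X$ with $\partial_L X=[\partial_L P,P]$, $\partial_R X=-[\partial_R P,P]$ exists on $\Omega$ (unique up to an additive constant); its image is the surface associated with $f$. *)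

theory Defs
  imports "HOL-Analysis.Analysis"
begin

text \<open>Points of Omega are given in light-cone coordinates (xi_L, xi_R) :: real \<times> real.\<close>

definition dL :: "(real \<times> real \<Rightarrow> 'a::real_normed_vector) \<Rightarrow> real \<times> real \<Rightarrow> 'a" where
  "dL g p = vector_derivative (\<lambda>t. g (fst p + t, snd p)) (at 0)"

definition dR :: "(real \<times> real \<Rightarrow> 'a::real_normed_vector) \<Rightarrow> real \<times> real \<Rightarrow> 'a" where
  "dR g p = vector_derivative (\<lambda>t. g (fst p, snd p + t)) (at 0)"

fun iter_partial :: "bool list \<Rightarrow> (real \<times> real \<Rightarrow> 'a::real_normed_vector) \<Rightarrow> real \<times> real \<Rightarrow> 'a" where
  "iter_partial [] g = g"
| "iter_partial (b # bs) g = (if b then dL else dR) (iter_partial bs g)"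

text \<open>C-infinity on an open set: all iterated partial derivatives exist and are
  (Frechet) differentiable, hence continuous.\<close>
definition smooth_on :: "(real \<times> real) set \<Rightarrow> (real \<times> real \<Rightarrow> 'a::real_normed_vector) \<Rightarrow> bool" where
  "smooth_on \<Omega> g \<longleftrightarrow> (\<forall>bs. \<forall>p\<in>\<Omega>. iter_partial bs g differentiable (at p))"

definition cdot :: "complex^'n \<Rightarrow> complex^'n \<Rightarrow> complex" where
  "cdot u v = (\<Sum>i\<in>UNIV. cnj (u $ i) * v $ i)"

definition outer :: "complex^'n \<Rightarrow> complex^'n \<Rightarrow> complex^'n^'n" where
  "outer u v = (\<chi> i j. u $ i * cnj (v $ j))"

definition projP :: "complex^'n \<Rightarrow> complex^'n^'n" where
  "projP f = mat 1 - (\<chi> i j. outer f f $ i $ j / cdot f f)"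

definition comm :: "complex^'n^'n \<Rightarrow> complex^'n^'n \<Rightarrow> complex^'n^'n" where
  "comm A B = A ** B - B ** A"

definition su_mat :: "complex^'n^'n \<Rightarrow> bool" where
  "su_mat A \<longleftrightarrow> (\<forall>i j. A $ i $ j = - cnj (A $ j $ i)) \<and> trace A = 0"

text \<open>Scalar product (A,B) = -1/2 tr(AB) on su(N) (kept complex-valued; it is real on su(N)).\<close>
definition su_inner :: "complex^'n^'n \<Rightarrow> complex^'n^'n \<Rightarrow> complex" where
  "su_inner A B = - trace (A ** B) / 2"

definition lin_indep3 :: "complex^'n \<Rightarrow> complex^'n \<Rightarrow> complex^'n \<Rightarrow> bool" where
  "lin_indep3 u v w \<longleftrightarrow> (\<forall>a b c::complex. a *s u + b *s v + c *s w = 0 \<longrightarrow> a = 0 \<and> b = 0 \<and> c = 0)"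

end

theory Submission
  imports Defs
begin



lemma cnj_mult_self: "cnj w * w = complex_of_real ((cmod w)\<^sup>2)"
  by (metis complex_norm_square mult.commute)

lemma cdot_self: "cdot z z = complex_of_real (\<Sum>i\<in>UNIV. (cmod (z$i))\<^sup>2)"
  unfolding cdot_def of_real_sum
  by (rule sum.cong) (simp_all only: cnj_mult_self)

lemma cdot_self_eq0: "cdot z z = 0 \<longleftrightarrow> z = 0"
proof
  assume "cdot z z = 0"
  then have "(\<Sum>i\<in>UNIV. (cmod (z$i))\<^sup>2) = 0" unfolding cdot_self of_real_eq_0_iff .
  then have "\<forall>i\<in>UNIV. (cmod (z$i))\<^sup>2 = 0" by (subst (asm) sum_nonneg_eq_0_iff) auto
  then show "z = 0" by (simp add: vec_eq_iff)
qed (simp add: cdot_def)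

lemma projP_nth: "projP x $ i $ j = (if i = j then 1 else 0) - x$i * cnj (x$j) / cdot x x"
  unfolding projP_def by (simp add: mat_def outer_def)

lemma projP_mult: "projP x *v v = v - (cdot x v / cdot x x) *s x"
proof -
  have "(projP x *v v) $ i = v $ i - (cdot x v / cdot x x) * x $ i" for i
  proof -
    have "(projP x *v v) $ i = (\<Sum>j\<in>UNIV. (if i = j then v$j else 0) - x$i * (cnj (x$j) * v$j) / cdot x x)"
      unfolding matrix_vector_mult_def projP_nth by (auto intro!: sum.cong simp: algebra_simps)
    also have "\<dots> = v$i - x$i * cdot x v / cdot x x"
      by (simp add: sum_subtractf sum_divide_distrib[symmetric] sum_distrib_left[symmetric] cdot_def)
    finally show ?thesis by simp
  qed
  then show ?thesis by (simp add: vec_eq_iff)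
qed


lemma cdot_diff_right: "cdot u (v - w) = cdot u v - cdot u w"
  unfolding cdot_def by (simp add: algebra_simps sum_subtractf)
lemma cdot_add_right: "cdot u (v + w) = cdot u v + cdot u w"
  unfolding cdot_def by (simp add: algebra_simps sum.distrib)
lemma cdot_diff_left: "cdot (v - w) u = cdot v u - cdot w u"
  unfolding cdot_def by (simp add: algebra_simps sum_subtractf)
lemma cdot_add_left: "cdot (v + w) u = cdot v u + cdot w u"
  unfolding cdot_def by (simp add: algebra_simps sum.distrib)
lemma cdot_smult_right: "cdot u (c *s v) = c * cdot u v"
  unfolding cdot_def by (simp add: algebra_simps sum_distrib_left)
lemma cdot_smult_left: "cdot (c *s v) u = cnj c * cdot v u"
  unfolding cdot_def by (simp add: algebra_simps sum_distrib_left)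
lemma cdot_neg_right: "cdot u (- v) = - cdot u v"
  unfolding cdot_def by (simp add: sum_negf)
lemma cdot_neg_left: "cdot (- v) u = - cdot v u"
  unfolding cdot_def by (simp add: sum_negf)


definition DP :: "complex^'n \<Rightarrow> complex^'n \<Rightarrow> complex^'n^'n" where
  "DP x v = (\<chi> i j. - (v$i * cnj (x$j) + x$i * cnj (v$j)) / cdot x x
      + x$i * cnj (x$j) * (cdot v x + cdot x v) / (cdot x x)\<^sup>2)"

definition CC :: "complex^'n \<Rightarrow> complex^'n \<Rightarrow> complex^'n^'n" where
  "CC x a = (\<chi> i j. (a$i * cnj (x$j) - x$i * cnj (a$j)) / cdot x x)"

lemma sum_lin2: "(\<Sum>k\<in>S. A k * \<alpha> + B k * \<beta>) = (\<Sum>k\<in>S. A k) * \<alpha> + (\<Sum>k\<in>S. B k) * (\<beta>::complex)"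
  by (simp add: sum.distrib sum_distrib_right)

lemma cdot_cnj: "cnj (cdot u v) = cdot v u"
  unfolding cdot_def by (simp add: mult.commute)

lemma mult_projP_right:
  "(M ** projP x) $ i $ j = M$i$j - (\<Sum>k\<in>UNIV. M$i$k * x$k) * cnj (x$j) / cdot x x"
proof -
  have "(M ** projP x) $ i $ j = (\<Sum>k\<in>UNIV. (if k = j then M$i$k else 0) - M$i$k * x$k * cnj (x$j) / cdot x x)"
    unfolding matrix_matrix_mult_def projP_nth vec_lambda_beta
    by (rule sum.cong) (simp_all add: right_diff_distrib)
  also have "\<dots> = M$i$j - (\<Sum>k\<in>UNIV. M$i$k * x$k) * cnj (x$j) / cdot x x"
    unfolding sum_subtractf sum_divide_distrib[symmetric] sum_distrib_right[symmetric] by simp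
  finally show ?thesis .
qed

lemma mult_projP_left:
  "(projP x ** M) $ i $ j = M$i$j - x$i * (\<Sum>k\<in>UNIV. cnj (x$k) * M$k$j) / cdot x x"
proof -
  have "(projP x ** M) $ i $ j = (\<Sum>k\<in>UNIV. (if i = k then M$k$j else 0) - x$i * (cnj (x$k) * M$k$j) / cdot x x)"
    unfolding matrix_matrix_mult_def projP_nth vec_lambda_beta
    by (rule sum.cong) (simp_all add: left_diff_distrib mult.assoc)
  also have "\<dots> = M$i$j - x$i * (\<Sum>k\<in>UNIV. cnj (x$k) * M$k$j) / cdot x x"
    unfolding sum_subtractf sum_divide_distrib[symmetric] sum_distrib_left[symmetric] by simp
  finally show ?thesis .
qed


lemma s0: "x \<noteq> 0 \<Longrightarrow> cdot x x \<noteq> 0"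
  by (simp add: cdot_self_eq0)

lemma DP_nth: "DP x v $ i $ j = - (v$i * cnj (x$j) + x$i * cnj (v$j)) / cdot x x
      + x$i * cnj (x$j) * (cdot v x + cdot x v) / (cdot x x)\<^sup>2"
  by (simp add: DP_def)

lemma sum1_aux: "DP x v $ i $ k * x $ k = cnj (x$k) * x$k * (- v$i / cdot x x + x$i * (cdot v x + cdot x v) / (cdot x x)\<^sup>2)
   + cnj (v$k) * x$k * (- x$i / cdot x x)"
  unfolding DP_nth divide_inverse by (simp add: algebra_simps)


lemma sum2_aux: "cnj (x $ k) * DP x v $ k $ j = cnj (x$k) * x$k * (- cnj (v$j) / cdot x x + cnj (x$j) * (cdot v x + cdot x v) / (cdot x x)\<^sup>2)
   + cnj (x$k) * v$k * (- cnj (x$j) / cdot x x)"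
  unfolding DP_nth divide_inverse by (simp add: algebra_simps)

lemma sum1: assumes "x \<noteq> 0" shows "(\<Sum>k\<in>UNIV. DP x v $ i $ k * x $ k) = - v$i + x$i * cdot x v / cdot x x"
proof -
  have "(\<Sum>k\<in>UNIV. DP x v $ i $ k * x $ k) = cdot x x * (- v$i / cdot x x + x$i * (cdot v x + cdot x v) / (cdot x x)\<^sup>2) + cdot v x * (- x$i / cdot x x)"
    unfolding sum1_aux sum_lin2 by (simp add: cdot_def)
  also have "\<dots> = - v$i + x$i * cdot x v / cdot x x" using s0[OF assms]
    by (simp add: field_simps power2_eq_square)
  finally show ?thesis .
qed

lemma sum2: assumes "x \<noteq> 0" shows "(\<Sum>k\<in>UNIV. cnj (x $ k) * DP x v $ k $ j) = - cnj (v$j) + cnj (x$j) * cdot v x / cdot x x"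
proof -
  have "(\<Sum>k\<in>UNIV. cnj (x $ k) * DP x v $ k $ j) = cdot x x * (- cnj (v$j) / cdot x x + cnj (x$j) * (cdot v x + cdot x v) / (cdot x x)\<^sup>2) + cdot x v * (- cnj (x$j) / cdot x x)"
    unfolding sum2_aux sum_lin2 by (simp add: cdot_def)
  also have "\<dots> = - cnj (v$j) + cnj (x$j) * cdot v x / cdot x x" using s0[OF assms]
    by (simp add: field_simps power2_eq_square)
  finally show ?thesis .
qed

lemma comm_DP:
  assumes "x \<noteq> 0"
  shows "comm (DP x v) (projP x) = CC x (projP x *v v)"
proof -
  have cs: "cnj (cdot x x) = cdot x x" using cdot_cnj by metis
  have cc: "cnj (cdot x v) = cdot v x" using cdot_cnj by metis
  have "comm (DP x v) (projP x) $ i $ j = CC x (projP x *v v) $ i $ j" for i j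
  proof -
    have "comm (DP x v) (projP x) $ i $ j = - (- v$i + x$i * cdot x v / cdot x x) * cnj (x$j) / cdot x x
       + x$i * (- cnj (v$j) + cnj (x$j) * cdot v x / cdot x x) / cdot x x"
      unfolding comm_def vector_minus_component mult_projP_right mult_projP_left sum1[OF assms] sum2[OF assms] divide_inverse
      by (simp add: algebra_simps)
    also have "\<dots> = CC x (projP x *v v) $ i $ j"
      unfolding CC_def projP_mult using s0[OF assms] cs cc
      by (simp add: field_simps power2_eq_square)
    finally show ?thesis .
  qed
  then show ?thesis by (simp add: vec_eq_iff)
qed

lemma trace_CC:
  "trace (CC x a ** CC x b) =
     (cdot x a * cdot x b - cdot b a * cdot x x - cdot x x * cdot a b + cdot b x * cdot a x) / (cdot x x)\<^sup>2"
proof -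
  define s where "s = cdot x x"
  have "trace (CC x a ** CC x b) = (\<Sum>i\<in>UNIV. \<Sum>k\<in>UNIV.
      ((cnj (x$i) * a$i) * (cnj (x$k) * b$k) - (cnj (b$i) * a$i) * (cnj (x$k) * x$k)
       - (cnj (x$i) * x$i) * (cnj (a$k) * b$k) + (cnj (b$i) * x$i) * (cnj (a$k) * x$k)) / s\<^sup>2)"
    unfolding trace_def matrix_matrix_mult_def CC_def s_def[symmetric] vec_lambda_beta
      times_divide_times_eq power2_eq_square
    by (intro sum.cong refl arg_cong2[where f="(/)"]) (simp add: algebra_simps)
  also have "\<dots> = (cdot x a * cdot x b - cdot b a * s - s * cdot a b + cdot b x * cdot a x) / s\<^sup>2"
    unfolding sum_divide_distrib[symmetric] sum.distrib sum_subtractf sum_product[symmetric]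
    by (simp add: cdot_def s_def)
  finally show ?thesis by (simp add: s_def)
qed



lemma hvd_vec:
  fixes g :: "real \<Rightarrow> 'a::real_normed_vector^'n"
  assumes "\<And>i. ((\<lambda>t. g t $ i) has_vector_derivative D $ i) F"
  shows "(g has_vector_derivative D) F"
proof -
  have "((\<lambda>y. ((g y - g (Lim F (\<lambda>x. x))) - (y - Lim F (\<lambda>x. x)) *\<^sub>R D) /\<^sub>R norm (y - Lim F (\<lambda>x. x))) \<longlongrightarrow> 0) F"
  proof (rule vec_tendstoI)
    fix i
    from assms[of i] show "((\<lambda>y. (((g y - g (Lim F (\<lambda>x. x))) - (y - Lim F (\<lambda>x. x)) *\<^sub>R D) /\<^sub>R norm (y - Lim F (\<lambda>x. x))) $ i) \<longlongrightarrow> 0 $ i) F"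
      unfolding has_vector_derivative_def has_derivative_def by simp
  qed
  then show ?thesis unfolding has_vector_derivative_def has_derivative_def
    by (simp add: bounded_linear_scaleR_left)
qed

lemma hvd_nth:
  fixes g :: "real \<Rightarrow> 'a::real_normed_vector^'n"
  assumes "(g has_vector_derivative D) F"
  shows "((\<lambda>t. g t $ i) has_vector_derivative D $ i) F"
  using bounded_linear.has_vector_derivative[OF bounded_linear_vec_nth assms] .

lemma hvd_inverse:
  fixes u :: "real \<Rightarrow> complex"
  assumes "(u has_vector_derivative u') (at t)" "u t \<noteq> 0"
  shows "((\<lambda>t. inverse (u t)) has_vector_derivative - (u' / (u t)\<^sup>2)) (at t)"
proof -
  have "((\<lambda>t. inverse (u t)) has_derivative (\<lambda>h. - (inverse (u t) * (h *\<^sub>R u') * inverse (u t)))) (at t)"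
    using Deriv.has_derivative_inverse[OF assms(2) assms(1)[unfolded has_vector_derivative_def]] .
  moreover have "(\<lambda>h. - (inverse (u t) * (h *\<^sub>R u') * inverse (u t))) = (\<lambda>h. h *\<^sub>R (- (u' / (u t)\<^sup>2)))"
    using assms(2) by (auto simp: scaleR_conv_of_real field_simps power2_eq_square)
  ultimately show ?thesis by (simp add: has_vector_derivative_def)
qed


lemma hvd_cdot_self:
  assumes "(\<gamma> has_vector_derivative v) (at t)"
  shows "((\<lambda>t. cdot (\<gamma> t) (\<gamma> t)) has_vector_derivative (cdot (\<gamma> t) v + cdot v (\<gamma> t))) (at t)"
proof -
  have "((\<lambda>t. \<Sum>k\<in>UNIV. cnj (\<gamma> t $ k) * \<gamma> t $ k) has_vector_derivative
      (\<Sum>k\<in>UNIV. cnj (\<gamma> t $ k) * v $ k + cnj (v $ k) * \<gamma> t $ k)) (at t)"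
    by (intro has_vector_derivative_sum has_vector_derivative_mult has_vector_derivative_cnj hvd_nth[OF assms])
  then show ?thesis by (simp add: cdot_def sum.distrib)
qed

lemma hvdP:
  assumes "(\<gamma> has_vector_derivative v) (at 0)" "\<gamma> 0 \<noteq> 0"
  shows "((\<lambda>t. projP (\<gamma> t)) has_vector_derivative DP (\<gamma> 0) v) (at 0)"
proof (rule hvd_vec, rule hvd_vec)
  fix i j
  let ?x = "\<gamma> 0"
  have u: "((\<lambda>t. inverse (cdot (\<gamma> t) (\<gamma> t))) has_vector_derivative
      - ((cdot ?x v + cdot v ?x) / (cdot ?x ?x)\<^sup>2)) (at 0)"
    by (rule hvd_inverse[OF hvd_cdot_self[OF assms(1)]]) (simp add: s0 assms)
  have "((\<lambda>t. (if i = j then 1 else 0) - \<gamma> t $ i * cnj (\<gamma> t $ j) * inverse (cdot (\<gamma> t) (\<gamma> t)))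
      has_vector_derivative DP ?x v $ i $ j) (at 0)"
    apply (rule has_vector_derivative_eq_rhs)
     apply (rule has_vector_derivative_diff)
      apply (rule has_vector_derivative_const)
     apply (rule has_vector_derivative_mult)
      apply (rule has_vector_derivative_mult)
       apply (rule hvd_nth[OF assms(1)])
      apply (rule has_vector_derivative_cnj)
      apply (rule hvd_nth[OF assms(1)])
     apply (rule u)
    unfolding DP_nth divide_inverse
    by (simp add: algebra_simps power2_eq_square)
  then show "((\<lambda>t. projP (\<gamma> t) $ i $ j) has_vector_derivative DP ?x v $ i $ j) (at 0)"
    by (simp add: projP_nth divide_inverse)
qed



lemma CC_neg: "CC x (- a) = - CC x a"
  by (simp add: CC_def vec_eq_iff divide_inverse algebra_simps)

lemma cdot_x_P: "x \<noteq> 0 \<Longrightarrow> cdot x (projP x *v z) = 0"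
  using s0[of x] by (simp add: projP_mult cdot_diff_right cdot_smult_right)

lemma cdot_P: "x \<noteq> 0 \<Longrightarrow> cdot y (projP x *v z) = cdot (projP x *v y) (projP x *v z)"
  by (simp add: projP_mult[of x y] cdot_diff_left cdot_smult_left cdot_x_P)

lemma su_CC:
  assumes "x \<noteq> 0" "cdot x a = 0" "cdot x b = 0"
  shows "su_inner (CC x a) (CC x b) = (cdot b a + cdot a b) / (2 * cdot x x)"
proof -
  have "cdot b x = 0" "cdot a x = 0" using assms(2,3) cdot_cnj by (metis complex_cnj_zero)+
  then show ?thesis unfolding su_inner_def trace_CC using assms(2,3) s0[OF assms(1)]
    by (simp add: field_simps power2_eq_square)
qed

lemma quad_psd:
  fixes pL q pR :: real
  assumes "\<forall>a b. a\<^sup>2 * pL + 2 * a * b * q + b\<^sup>2 * pR \<ge> 0"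
  shows "pL * pR - q\<^sup>2 \<ge> 0"
proof -
  have pL: "pL \<ge> 0" using assms[rule_format, of 1 0] by simp
  show ?thesis
  proof (cases "pL = 0")
    case True
    have "q = 0"
    proof (rule ccontr)
      assume "q \<noteq> 0"
      have "(- (pR + 1) / (2 * q))\<^sup>2 * pL + 2 * (- (pR + 1) / (2 * q)) * 1 * q + 1\<^sup>2 * pR \<ge> 0"
        using assms by blast
      then show False using True \<open>q \<noteq> 0\<close> by (simp add: field_simps)
    qed
    then show ?thesis using True by simp
  next
    case False
    have "q\<^sup>2 * pL + 2 * q * (- pL) * q + (- pL)\<^sup>2 * pR \<ge> 0"
      using assms by blast
    then have "pL * (pL * pR - q\<^sup>2) \<ge> 0" by (simp add: algebra_simps power2_eq_square)
    then show ?thesis using False pL by (simp add: zero_le_mult_iff)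
  qed
qed

theorem mainTheorem1:
  fixes \<Omega> :: "(real \<times> real) set"
    and f :: "real \<times> real \<Rightarrow> complex^'n"
    and X :: "real \<times> real \<Rightarrow> complex^'n^'n"
  assumes "open \<Omega>" and "connected \<Omega>" and "simply_connected \<Omega>"
    and "\<forall>p\<in>\<Omega>. f p \<noteq> 0"
    and "smooth_on \<Omega> f"
    and EL: "\<forall>p\<in>\<Omega>. projP (f p) *v
           (dL (dR f) p - (1 / cdot (f p) (f p)) *s
              (cdot (f p) (dR f p) *s dL f p + cdot (f p) (dL f p) *s dR f p)) = 0"
    and "\<forall>p\<in>\<Omega>. su_mat (X p)"
    and XL: "\<forall>p\<in>\<Omega>. ((\<lambda>t. X (fst p + t, snd p)) has_vector_derivative
                 comm (dL (\<lambda>q. projP (f q)) p) (projP (f p))) (at 0)"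
    and XR: "\<forall>p\<in>\<Omega>. ((\<lambda>t. X (fst p, snd p + t)) has_vector_derivative
                 - comm (dR (\<lambda>q. projP (f q)) p) (projP (f p))) (at 0)"
  shows "\<forall>p\<in>\<Omega>.
      let JL = cdot (dL f p) (projP (f p) *v dL f p) / cdot (f p) (f p);
          JR = cdot (dR f p) (projP (f p) *v dR f p) / cdot (f p) (f p);
          GLL = su_inner (dL X p) (dL X p);
          GRR = su_inner (dR X p) (dR X p);
          GLR = su_inner (dL X p) (dR X p);
          GRL = su_inner (dR X p) (dL X p)
      in GLL = JL \<and> GRR = JR
       \<and> GLR = complex_of_real (- Re (cdot (dR f p) (projP (f p) *v dL f p) / cdot (f p) (f p)))
       \<and> GRL = GLR
       \<and> Re JL \<ge> 0 \<and> Re JR \<ge> 0 \<and> Re JL * Re JR - (Re GLR)\<^sup>2 \<ge> 0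
       \<and> (\<forall>a b::real. a\<^sup>2 * Re JL + 2 * a * b * Re GLR + b\<^sup>2 * Re JR \<ge> 0)
       \<and> ((Im (cdot (dL f p) (projP (f p) *v dR f p)) \<noteq> 0
             \<or> lin_indep3 (dL f p) (dR f p) (f p))
            \<longrightarrow> (\<forall>a b::real. (a, b) \<noteq> (0, 0) \<longrightarrow>
                   a\<^sup>2 * Re JL + 2 * a * b * Re GLR + b\<^sup>2 * Re JR > 0))"
proof
  fix p assume pO: "p \<in> \<Omega>"
  define x where "x = f p"
  define v where "v = dL f p"
  define w where "w = dR f p"
  have x0: "x \<noteq> 0" using assms(4) pO x_def by auto
  have fd: "f differentiable (at p)"
    using assms(5) pO unfolding smooth_on_def by (metis iter_partial.simps(1))
  have gL: "((\<lambda>t. f (fst p + t, snd p)) has_vector_derivative v) (at 0)"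
  proof -
    have "((\<lambda>t::real. (fst p + t, snd p)) has_derivative (\<lambda>h. (h, 0))) (at 0)"
      by (auto intro!: derivative_eq_intros)
    then have "(\<lambda>t::real. (fst p + t, snd p)) differentiable (at 0)"
      by (auto simp: differentiable_def)
    from differentiable_chain_at[OF this, of f] fd
    have "(f \<circ> (\<lambda>t. (fst p + t, snd p))) differentiable (at 0)" by simp
    from vector_derivative_works[THEN iffD1, OF this]
    show ?thesis unfolding v_def dL_def by (simp add: o_def)
  qed
  have gR: "((\<lambda>t. f (fst p, snd p + t)) has_vector_derivative w) (at 0)"
  proof -
    have "((\<lambda>t::real. (fst p, snd p + t)) has_derivative (\<lambda>h. (0, h))) (at 0)"
      by (auto intro!: derivative_eq_intros)
    then have "(\<lambda>t::real. (fst p, snd p + t)) differentiable (at 0)"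
      by (auto simp: differentiable_def)
    from differentiable_chain_at[OF this, of f] fd
    have "(f \<circ> (\<lambda>t. (fst p, snd p + t))) differentiable (at 0)" by simp
    from vector_derivative_works[THEN iffD1, OF this]
    show ?thesis unfolding w_def dR_def by (simp add: o_def)
  qed
  have "((\<lambda>t. projP (f (fst p + t, snd p))) has_vector_derivative DP x v) (at 0)"
    using hvdP[OF gL] x0 by (simp add: x_def)
  then have PL: "dL (\<lambda>q. projP (f q)) p = DP x v"
    unfolding dL_def by (rule vector_derivative_at)
  have "((\<lambda>t. projP (f (fst p, snd p + t))) has_vector_derivative DP x w) (at 0)"
    using hvdP[OF gR] x0 by (simp add: x_def)
  then have PR: "dR (\<lambda>q. projP (f q)) p = DP x w"
    unfolding dR_def by (rule vector_derivative_at)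
  define a where "a = projP x *v v"
  define b where "b = projP x *v w"
  have XLd: "dL X p = CC x a"
    using vector_derivative_at[OF XL[rule_format, OF pO]]
    unfolding dL_def[symmetric] PL a_def x_def[symmetric] comm_DP[OF x0] .
  have XRd: "dR X p = CC x (- b)"
    using vector_derivative_at[OF XR[rule_format, OF pO]]
    unfolding dR_def[symmetric] PR b_def x_def[symmetric] comm_DP[OF x0] CC_neg .
  have xa: "cdot x a = 0" and xb: "cdot x b = 0" and xnb: "cdot x (- b) = 0"
    using cdot_x_P[OF x0] a_def b_def by (auto simp: cdot_neg_right)
  define r where "r = (\<Sum>i\<in>UNIV. (cmod (x$i))\<^sup>2)"
  have sr: "cdot x x = complex_of_real r" unfolding r_def by (rule cdot_self)
  have r0: "r > 0"
  proof -
    have "r \<ge> 0" unfolding r_def by (simp add: sum_nonneg)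
    moreover have "r \<noteq> 0" using s0[OF x0] sr by auto
    ultimately show ?thesis by simp
  qed
  define na where "na = (\<Sum>i\<in>UNIV. (cmod (a$i))\<^sup>2)"
  define nb where "nb = (\<Sum>i\<in>UNIV. (cmod (b$i))\<^sup>2)"
  have A: "cdot a a = complex_of_real na" unfolding na_def by (rule cdot_self)
  have B: "cdot b b = complex_of_real nb" unfolding nb_def by (rule cdot_self)
  have na0: "na \<ge> 0" and nb0: "nb \<ge> 0" unfolding na_def nb_def by (simp_all add: sum_nonneg)
  define Z where "Z = cdot b a"
  have Zc: "cdot a b = cnj Z" unfolding Z_def by (simp add: cdot_cnj)
  have JL: "cdot v (projP x *v v) = cdot a a" unfolding a_def by (rule cdot_P[OF x0])
  have JR: "cdot w (projP x *v w) = cdot b b" unfolding b_def by (rule cdot_P[OF x0])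
  have JLR: "cdot w (projP x *v v) = Z" unfolding Z_def a_def b_def by (rule cdot_P[OF x0])
  have JRL: "cdot v (projP x *v w) = cnj Z" unfolding Zc[symmetric] a_def b_def by (rule cdot_P[OF x0])
  have GLL: "su_inner (dL X p) (dL X p) = cdot a a / cdot x x"
    unfolding XLd su_CC[OF x0 xa xa] by (simp add: field_simps)
  have GRR: "su_inner (dR X p) (dR X p) = cdot b b / cdot x x"
    unfolding XRd su_CC[OF x0 xnb xnb] by (simp add: field_simps cdot_neg_left cdot_neg_right)
  have GLR: "su_inner (dL X p) (dR X p) = complex_of_real (- Re Z / r)"
    unfolding XLd XRd su_CC[OF x0 xa xnb] cdot_neg_left cdot_neg_right Zc Z_def[symmetric] sr
    using r0 by (simp add: complex_eq_iff field_simps)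
  have GRL: "su_inner (dR X p) (dL X p) = complex_of_real (- Re Z / r)"
    unfolding XLd XRd su_CC[OF x0 xnb xa] cdot_neg_left cdot_neg_right Zc Z_def[symmetric] sr
    using r0 by (simp add: complex_eq_iff field_simps)
  have ReJL: "Re (cdot a a / cdot x x) = na / r" unfolding A sr by simp
  have ReJR: "Re (cdot b b / cdot x x) = nb / r" unfolding B sr by simp
  have GLR': "complex_of_real (- Re (cdot w (projP x *v v) / cdot x x)) = complex_of_real (- Re Z / r)"
    unfolding JLR sr by simp
  have Q: "\<alpha>\<^sup>2 * (na / r) + 2 * \<alpha> * \<beta> * (- Re Z / r) + \<beta>\<^sup>2 * (nb / r)
      = Re (cdot (of_real \<alpha> *s a - of_real \<beta> *s b) (of_real \<alpha> *s a - of_real \<beta> *s b)) / r" for \<alpha> \<beta>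
  proof -
    have "cdot (of_real \<alpha> *s a - of_real \<beta> *s b) (of_real \<alpha> *s a - of_real \<beta> *s b)
      = of_real (\<alpha>\<^sup>2) * cdot a a - of_real (\<alpha> * \<beta>) * (cdot a b + cdot b a) + of_real (\<beta>\<^sup>2) * cdot b b"
      by (simp add: cdot_diff_left cdot_diff_right cdot_smult_left cdot_smult_right algebra_simps power2_eq_square)
    then have "Re (cdot (of_real \<alpha> *s a - of_real \<beta> *s b) (of_real \<alpha> *s a - of_real \<beta> *s b))
      = \<alpha>\<^sup>2 * na - \<alpha> * \<beta> * (2 * Re Z) + \<beta>\<^sup>2 * nb"
      unfolding A B Zc Z_def[symmetric] by simp
    then show ?thesis using r0
      by (simp add: field_simps power2_eq_square)
  qed
  have Qnn: "Re (cdot z z) \<ge> 0" for z :: "complex^'n"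
    by (simp add: cdot_self sum_nonneg)
  have Qz: "Re (cdot z z) = 0 \<Longrightarrow> z = 0" for z :: "complex^'n"
    by (metis cdot_self cdot_self_eq0 Re_complex_of_real of_real_0)
  have psd: "\<forall>\<alpha> \<beta>. \<alpha>\<^sup>2 * (na / r) + 2 * \<alpha> * \<beta> * (- Re Z / r) + \<beta>\<^sup>2 * (nb / r) \<ge> 0"
    unfolding Q using Qnn r0 by simp
  have pd: "\<alpha>\<^sup>2 * (na / r) + 2 * \<alpha> * \<beta> * (- Re Z / r) + \<beta>\<^sup>2 * (nb / r) > 0"
    if cond: "Im (cdot v (projP x *v w)) \<noteq> 0 \<or> lin_indep3 v w x" and ne: "(\<alpha>, \<beta>) \<noteq> (0, 0)" for \<alpha> \<beta>
  proof (rule ccontr)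
    assume "\<not> ?thesis"
    then have "Re (cdot (of_real \<alpha> *s a - of_real \<beta> *s b) (of_real \<alpha> *s a - of_real \<beta> *s b)) \<le> 0"
      unfolding Q using r0 by (simp add: divide_le_0_iff not_less)
    then have z: "of_real \<alpha> *s a - of_real \<beta> *s b = 0" using Qnn Qz by (meson order_antisym)
    show False using cond
    proof
      assume im: "Im (cdot v (projP x *v w)) \<noteq> 0"
      show False
      proof (cases "\<alpha> = 0")
        case True
        then have "\<beta> \<noteq> 0" using ne by simp
        with z True have "b = 0" by (simp add: vec_eq_iff)
        then have "cdot a b = 0" by (simp add: cdot_def)
        then show False using im by (simp add: JRL Zc[symmetric])
      next
        case False
        from z have "a = of_real (\<beta> / \<alpha>) *s b" using False
          by (simp add: vec_eq_iff field_simps)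
        then have "cdot a b = of_real (\<beta> / \<alpha> * nb)" by (simp add: cdot_smult_left B)
        then show False using im by (simp add: JRL Zc[symmetric])
      qed
    next
      assume li: "lin_indep3 v w x"
      have "of_real \<alpha> *s v + (- of_real \<beta>) *s w
          + (of_real \<beta> * cdot x w / cdot x x - of_real \<alpha> * cdot x v / cdot x x) *s x
          = of_real \<alpha> *s a - of_real \<beta> *s b"
        unfolding a_def b_def projP_mult by (simp add: vec_eq_iff algebra_simps)
      then have "complex_of_real \<alpha> = 0 \<and> - complex_of_real \<beta> = 0"
        using li[unfolded lin_indep3_def, rule_format, OF trans[OF _ z]] by blast
      then show False using ne by simp
    qed
  qed
  show "let JL = cdot (dL f p) (projP (f p) *v dL f p) / cdot (f p) (f p);
          JR = cdot (dR f p) (projP (f p) *v dR f p) / cdot (f p) (f p);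
          GLL = su_inner (dL X p) (dL X p);
          GRR = su_inner (dR X p) (dR X p);
          GLR = su_inner (dL X p) (dR X p);
          GRL = su_inner (dR X p) (dL X p)
      in GLL = JL \<and> GRR = JR
       \<and> GLR = complex_of_real (- Re (cdot (dR f p) (projP (f p) *v dL f p) / cdot (f p) (f p)))
       \<and> GRL = GLR
       \<and> Re JL \<ge> 0 \<and> Re JR \<ge> 0 \<and> Re JL * Re JR - (Re GLR)\<^sup>2 \<ge> 0
       \<and> (\<forall>a b::real. a\<^sup>2 * Re JL + 2 * a * b * Re GLR + b\<^sup>2 * Re JR \<ge> 0)
       \<and> ((Im (cdot (dL f p) (projP (f p) *v dR f p)) \<noteq> 0
             \<or> lin_indep3 (dL f p) (dR f p) (f p))
            \<longrightarrow> (\<forall>a b::real. (a, b) \<noteq> (0, 0) \<longrightarrow>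
                   a\<^sup>2 * Re JL + 2 * a * b * Re GLR + b\<^sup>2 * Re JR > 0))"
    unfolding Let_def x_def[symmetric] v_def[symmetric] w_def[symmetric]
    unfolding JL JR GLL GRR GLR GRL GLR' ReJL ReJR Re_complex_of_real
    using psd pd quad_psd[OF psd] na0 nb0 r0 by auto
qed

end
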